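(* Let $1<p<\infty$ and let $c\colon\mathbb{R}^d\to\mathbb{R}$ be a cost satisfying the assumptions in the context. Let $\lambda,\mu$ be non-negative finite measures on $\mathbb{R}^d$ with $\lambda(\mathbb{R}^d)=\mu(\mathbb{R}^d)$, and let $\pi\in\Pi(\lambda,\mu)$ be a coupling whose support is $c$-cyclically monotone. There exists $\varepsilon_0>0$ depending only on $d,p,\Lambda$ such that if $E(4)+D(4)\le\varepsilon_0$, then for every $(x,y)\in\mathrm{Spt}\,\pi$ with $x\in B_3$ or $y\in B_3$, $$|x-y|\lesssim (E(4)+D(4))^{\frac{1}{p+d}}.$$ As a consequence, for $(x,y)\in\mathrm{Spt}\,\pi$ and $t\in[0,1]$: if $x\in B_3$ or $y\in B_3$, then $(1-t)x+ty\in B_4$.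
   Context: $c\colon\mathbb{R}^d\to\mathbb{R}$ is $C^1$ and there is $\Lambda\ge1$ such that for all $x,y\in\mathbb{R}^d$, $s\in[0,1]$: (i) $\Lambda^{-1}s(1-s)V_p(x,y)+c(sx+(1-s)y)\le s\,c(x)+(1-s)c(y)$ with $V_p(x,y)=(|x|^2+|y|^2)^{\frac{p-2}{2}}|x-y|^2$; (ii) $\Lambda^{-1}|x|^p\le c(x)\le\Lambda|x|^p$; (iii) $|c(x)-c(y)|\le\Lambda(|x|+|y|)^{p-1}|x-y|$; (iv) $|\nabla c(x)-\nabla c(y)|\le\Lambda(|x|+|y|)^{p-2}|x-y|$. A set $S\subset\mathbb{R}^d\times\mathbb{R}^d$ is $c$-cyclically monotone if for all $N$ and $(x_1,y_1),\dots,(x_N,y_N)\in S$, $\sum_i c(x_i-y_i)\le\sum_i c(x_i-y_{i+1})$ with $y_{N+1}=y_1$. $B_r$ is the open ball of radius $r$ at $0$; $\#_R=(B_R\times\mathbb{R}^d)\cup(\mathbb{R}^d\times B_R)$; $\kappa_{\lambda,R}=\lambda(B_R)/|B_R|$, $\kappa_{\mu,R}=\mu(B_R)/|B_R|$; $W_p^p(\alpha,\beta)=\inf_{\gamma\in\Pi(\alpha,\beta)}\int|x-y|^p\,\mathrm{d}\gamma$. Define $E(R)=\frac{1}{|B_R|}\int_{\#_R}c(x-y)\,\mathrm{d}\pi$ and $D(R)=\frac{1}{|B_R|}W_p^p(\lambda\llcorner B_R,\kappa_{\lambda,R}\,\mathrm{d}x\llcorner B_R)+\frac{R^p}{\kappa_{\lambda,R}^{p-1}}|\kappa_{\lambda,R}-1|^p+\frac{1}{|B_R|}W_p^p(\mu\llcorner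 B_R,\kappa_{\mu,R}\,\mathrm{d}x\llcorner B_R)+\frac{R^p}{\kappa_{\mu,R}^{p-1}}|\kappa_{\mu,R}-1|^p$. $A\lesssim B$ means $A\le CB$ with $C$ depending only on $d,p,\Lambda$. *)

theory Defs
  imports "HOL-Analysis.Analysis"
begin

definition Vp :: "real \<Rightarrow> 'a::euclidean_space \<Rightarrow> 'a \<Rightarrow> real" where
  "Vp p x y = (norm x ^ 2 + norm y ^ 2) powr ((p - 2) / 2) * norm (x - y) ^ 2"

definition cost_assms :: "real \<Rightarrow> real \<Rightarrow> ('a::euclidean_space \<Rightarrow> real) \<Rightarrow> ('a \<Rightarrow> 'a) \<Rightarrow> bool" where
  "cost_assms p \<Lambda> c g \<longleftrightarrow>
     (\<forall>x. (c has_derivative (\<lambda>h. g x \<bullet> h)) (at x)) \<and> continuous_on UNIV g \<and>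
     (\<forall>x y s. 0 \<le> s \<and> s \<le> 1 \<longrightarrow>
        s * (1 - s) * Vp p x y / \<Lambda> + c (s *\<^sub>R x + (1 - s) *\<^sub>R y) \<le> s * c x + (1 - s) * c y) \<and>
     (\<forall>x. norm x powr p / \<Lambda> \<le> c x \<and> c x \<le> \<Lambda> * norm x powr p) \<and>
     (\<forall>x y. \<bar>c x - c y\<bar> \<le> \<Lambda> * (norm x + norm y) powr (p - 1) * norm (x - y)) \<and>
     (\<forall>x y. norm (g x - g y) \<le> \<Lambda> * (norm x + norm y) powr (p - 2) * norm (x - y))"

definition c_cyclically_monotone :: "('a::real_vector \<Rightarrow> real) \<Rightarrow> ('a \<times> 'a) set \<Rightarrow> bool" where
  "c_cyclically_monotone c S \<longleftrightarrow>
     (\<forall>N::nat. \<forall>z :: nat \<Rightarrow> 'a \<times> 'a. N \<ge> 1 \<and> (\<forall>i<N. z i \<in> S) \<longrightarrow>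
        (\<Sum>i<N. c (fst (z i) - snd (z i))) \<le> (\<Sum>i<N. c (fst (z i) - snd (z ((i + 1) mod N)))))"

definition Spt :: "'a::metric_space measure \<Rightarrow> 'a set" where
  "Spt M = {z. \<forall>e>0. emeasure M (ball z e) > 0}"

definition couplings :: "'a::euclidean_space measure \<Rightarrow> 'a measure \<Rightarrow> ('a \<times> 'a) measure set" where
  "couplings \<alpha> \<beta> = {\<gamma>. sets \<gamma> = sets borel \<and> finite_measure \<gamma> \<and>
      distr \<gamma> borel fst = \<alpha> \<and> distr \<gamma> borel snd = \<beta>}"

text \<open>W_p^p(\<alpha>,\<beta>) (infimum over couplings; \<infinity> if there is none).\<close>
definition Wpp :: "real \<Rightarrow> 'a::euclidean_space measure \<Rightarrow> 'a measure \<Rightarrow> ennreal" where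
  "Wpp p \<alpha> \<beta> = (INF \<gamma>\<in>couplings \<alpha> \<beta>. \<integral>\<^sup>+ z. ennreal (norm (fst z - snd z) powr p) \<partial>\<gamma>)"

definition restr :: "'a measure \<Rightarrow> 'a set \<Rightarrow> 'a measure" where
  "restr M A = density M (indicator A)"

definition kappa :: "'a::euclidean_space measure \<Rightarrow> real \<Rightarrow> real" where
  "kappa M R = measure M (ball 0 R) / measure (lborel :: 'a measure) (ball 0 R)"

definition sharp :: "real \<Rightarrow> ('a::real_normed_vector \<times> 'a) set" where
  "sharp R = (ball 0 R \<times> UNIV) \<union> (UNIV \<times> ball 0 R)"

definition Eexc :: "('a::euclidean_space \<Rightarrow> real) \<Rightarrow> ('a \<times> 'a) measure \<Rightarrow> real \<Rightarrow> ennreal" where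
  "Eexc c \<pi> R = (\<integral>\<^sup>+ z\<in>sharp R. ennreal (c (fst z - snd z)) \<partial>\<pi>)
                  / ennreal (measure (lborel :: 'a measure) (ball 0 R))"

text \<open>The term R^p/\<kappa>^(p-1) |\<kappa>-1|^p, with the convention 1/0 = \<infinity> when \<kappa> = 0.\<close>
definition mass_term :: "real \<Rightarrow> real \<Rightarrow> real \<Rightarrow> ennreal" where
  "mass_term p R \<kappa> = (if \<kappa> = 0 then \<infinity> else ennreal (R powr p / \<kappa> powr (p - 1) * \<bar>\<kappa> - 1\<bar> powr p))"

definition Ddata_one :: "real \<Rightarrow> 'a::euclidean_space measure \<Rightarrow> real \<Rightarrow> ennreal" where
  "Ddata_one p M R =
     Wpp p (restr M (ball 0 R)) (density lborel (\<lambda>x. ennreal (kappa M R) * indicator (ball 0 R) x))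
       / ennreal (measure (lborel :: 'a measure) (ball 0 R))
     + mass_term p R (kappa M R)"

definition Ddata :: "real \<Rightarrow> 'a::euclidean_space measure \<Rightarrow> 'a measure \<Rightarrow> real \<Rightarrow> ennreal" where
  "Ddata p la mu R = Ddata_one p la R + Ddata_one p mu R"

end

theory Submission
  imports Defs "HOL-Analysis.Analysis"
begin

lemma Spt_null:
  fixes M :: "'b::{metric_space,second_countable_topology} measure"
  assumes "sets M = sets borel"
  shows "UNIV - Spt M \<in> null_sets M"
proof -
  define F where "F = {ball z e | z e. e > 0 \<and> emeasure M (ball z e) = 0}"
  have opF: "\<And>S. S \<in> F \<Longrightarrow> open S" unfolding F_def by auto
  obtain F' where F': "F' \<subseteq> F" "countable F'" "\<Union>F' = \<Union>F"
    using Lindelof[OF opF] by blast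
  have eq: "UNIV - Spt M = \<Union>F"
  proof
    show "UNIV - Spt M \<subseteq> \<Union>F"
    proof
      fix z assume "z \<in> UNIV - Spt M"
      then obtain e where "e > 0" "\<not> emeasure M (ball z e) > 0" unfolding Spt_def by auto
      then have "emeasure M (ball z e) = 0" by (simp add: not_gr_zero)
      then have "ball z e \<in> F" unfolding F_def using \<open>e > 0\<close> by auto
      then show "z \<in> \<Union>F" using \<open>e > 0\<close> by (meson UnionI centre_in_ball)
    qed
    show "\<Union>F \<subseteq> UNIV - Spt M"
    proof
      fix w assume "w \<in> \<Union>F"
      then obtain z e where ze: "e > 0" "emeasure M (ball z e) = 0" "w \<in> ball z e"
        unfolding F_def by auto
      define e' where "e' = e - dist z w"
      have "e' > 0" using ze(3) by (simp add: e'_def dist_commute)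
      have sub: "ball w e' \<subseteq> ball z e"
      proof
        fix v assume "v \<in> ball w e'"
        then have "dist w v < e'" by simp
        moreover have "dist z v \<le> dist z w + dist w v" by (rule dist_triangle)
        ultimately show "v \<in> ball z e" unfolding e'_def by simp
      qed
      have "ball w e' \<in> sets M" using assms by simp
      moreover have "ball z e \<in> sets M" using assms by simp
      ultimately have "emeasure M (ball w e') \<le> emeasure M (ball z e)"
        using sub by (simp add: emeasure_mono)
      then have "emeasure M (ball w e') = 0" using ze(2) by simp
      then show "w \<in> UNIV - Spt M" unfolding Spt_def using \<open>e' > 0\<close> by auto
    qed
  qed
  have "(\<Union>S\<in>F'. S) \<in> null_sets M"
  proof (rule null_sets_UN')
    show "countable F'" by fact
    fix S assume "S \<in> F'"
    then have "S \<in> F" using F' by auto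
    then obtain z e where "S = ball z e" "emeasure M (ball z e) = 0" unfolding F_def by auto
    then show "S \<in> null_sets M" using assms by (simp add: null_sets_def)
  qed
  then show ?thesis using eq F'(3) by simp
qed

lemma core:
  fixes c :: "'a::euclidean_space \<Rightarrow> real"
  assumes p: "1 < p" and L: "\<Lambda> \<ge> 1"
    and conv: "\<And>x s. 0 \<le> s \<Longrightarrow> s \<le> 1 \<Longrightarrow> c (s *\<^sub>R x) \<le> s * c x"
    and low: "\<And>x. norm x powr p / \<Lambda> \<le> c x"
    and lip: "\<And>x y. \<bar>c x - c y\<bar> \<le> \<Lambda> * (norm x + norm y) powr (p - 1) * norm (x - y)"
    and mono: "c (x0 - y0) + c (x - y) \<le> c (x0 - y) + c (x - y0)"
    and M: "M = norm (x0 - y0)" "M > 0"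
    and r: "0 < r" "r \<le> \<theta> * M"
    and th: "0 < \<theta>" "\<theta> \<le> 1/4" "(4 * \<theta>) powr (p - 1) * (2 * \<Lambda>) < 1 / (2 * \<Lambda>)"
    and de: "0 < \<delta>" "\<delta> \<le> 1" "\<Lambda> * 3 powr (p - 1) * \<delta> \<le> 1 / (2 * \<Lambda>)"
    and x: "norm (x - (x0 + (r / M) *\<^sub>R (y0 - x0))) < \<delta> * r"
  shows "norm (x - y) > \<theta> * M"
proof (rule ccontr)
  assume "\<not> norm (x - y) > \<theta> * M"
  then have xy: "norm (x - y) \<le> \<theta> * M" by simp
  define z where "z = x0 - y0"
  define s where "s = 1 - r / M"
  define w where "w = x - (x0 + (r / M) *\<^sub>R (y0 - x0))"
  have "\<theta> * M \<le> 1 * M" using th M by (intro mult_right_mono) auto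
  then have rM: "r \<le> M" using r by linarith
  have s01: "0 \<le> s" "s \<le> 1" using rM r M by (auto simp: s_def field_simps)
  have nz: "norm z = M" using M z_def by simp
  have xy0: "x - y0 = s *\<^sub>R z + w"
    unfolding w_def s_def z_def by (simp add: algebra_simps)
  have nw: "norm w < \<delta> * r" using x w_def by simp
  have Mp: "M powr p = M * M powr (p - 1)"
    using M by (simp add: powr_mult_base)
  have cz: "c z \<ge> M powr p / \<Lambda>" using low[of z] nz by simp
  have "c (s *\<^sub>R z) \<le> s * c z" using conv s01 by simp
  then have "c z - c (s *\<^sub>R z) \<ge> (1 - s) * c z" by (simp add: algebra_simps)
  moreover have "(1 - s) * c z \<ge> (r / M) * (M powr p / \<Lambda>)"
  proof -
    have "1 - s = r / M" unfolding s_def by simp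
    moreover have "r / M \<ge> 0" using r M by simp
    ultimately show ?thesis using cz mult_left_mono[OF cz \<open>r / M \<ge> 0\<close>] by simp
  qed
  moreover have "(r / M) * (M powr p / \<Lambda>) = r * M powr (p - 1) / \<Lambda>"
    using Mp M by (simp add: field_simps)
  ultimately have low1: "c z - c (s *\<^sub>R z) \<ge> r * M powr (p - 1) / \<Lambda>" by simp
  have nsz: "norm (s *\<^sub>R z) \<le> M" using s01 nz M mult_right_mono[of s 1 M] by simp
  have "\<delta> * r \<le> 1 * r" using de r by (intro mult_right_mono) auto
  then have "\<delta> * r \<le> M" using rM by linarith
  then have nszw: "norm (s *\<^sub>R z + w) \<le> 2 * M"
    using nsz nw norm_triangle_ineq[of "s *\<^sub>R z" w] by simp
  have "\<bar>c (s *\<^sub>R z + w) - c (s *\<^sub>R z)\<bar> \<le> \<Lambda> * (norm (s *\<^sub>R z + w) + norm (s *\<^sub>R z)) powr (p - 1) * norm w"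
    using lip[of "s *\<^sub>R z + w" "s *\<^sub>R z"] by simp
  also have "\<dots> \<le> \<Lambda> * (3 * M) powr (p - 1) * (\<delta> * r)"
  proof -
    have "(norm (s *\<^sub>R z + w) + norm (s *\<^sub>R z)) powr (p - 1) \<le> (3 * M) powr (p - 1)"
      using nszw nsz p by (intro powr_mono2) auto
    then show ?thesis using L nw
      by (intro mult_mono) auto
  qed
  also have "\<dots> = (\<Lambda> * 3 powr (p - 1) * \<delta>) * (r * M powr (p - 1))"
    using M by (simp add: powr_mult)
  also have "\<dots> \<le> (1 / (2 * \<Lambda>)) * (r * M powr (p - 1))"
    using de r M by (intro mult_right_mono) auto
  finally have err: "\<bar>c (s *\<^sub>R z + w) - c (s *\<^sub>R z)\<bar> \<le> r * M powr (p - 1) / (2 * \<Lambda>)" by simp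
  have lowA: "c (x0 - y0) - c (x - y0) \<ge> r * M powr (p - 1) / (2 * \<Lambda>)"
  proof -
    define Q where "Q = r * M powr (p - 1) / (2 * \<Lambda>)"
    have q2: "r * M powr (p - 1) / \<Lambda> = 2 * Q" unfolding Q_def by simp
    have a1: "2 * Q \<le> c z - c (s *\<^sub>R z)" using low1 q2 by simp
    have a2: "c (s *\<^sub>R z + w) - c (s *\<^sub>R z) \<le> Q" using err unfolding Q_def by simp
    have "c (x - y0) = c (s *\<^sub>R z + w)" using xy0 by simp
    moreover have "c (x0 - y0) = c z" using z_def by simp
    ultimately show ?thesis using a1 a2 unfolding Q_def[symmetric] by linarith
  qed
  define h where "h = x0 - x"
  have hn: "norm h \<le> 2 * r"
  proof -
    have "h = - ((r / M) *\<^sub>R (y0 - x0)) - w" unfolding h_def w_def by (simp add: algebra_simps)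
    then have "norm h \<le> norm ((r / M) *\<^sub>R (y0 - x0)) + norm w"
      by (metis norm_minus_cancel norm_triangle_ineq4)
    moreover have "norm ((r / M) *\<^sub>R (y0 - x0)) = r"
      using M r by (simp add: norm_minus_commute)
    moreover have "\<delta> * r \<le> 1 * r" using de r by (intro mult_right_mono) auto
    ultimately show ?thesis using nw by linarith
  qed
  have x0y: "x0 - y = h + (x - y)" unfolding h_def by simp
  have n1: "norm (x0 - y) + norm (x - y) \<le> 4 * \<theta> * M"
  proof -
    have "norm (x0 - y) \<le> norm h + norm (x - y)" unfolding x0y by (rule norm_triangle_ineq)
    then show ?thesis using hn xy r by linarith
  qed
  have "c (x0 - y) - c (x - y) \<le> \<Lambda> * (norm (x0 - y) + norm (x - y)) powr (p - 1) * norm (x0 - y - (x - y))"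
    using lip[of "x0 - y" "x - y"] by simp
  also have "\<dots> \<le> \<Lambda> * (4 * \<theta> * M) powr (p - 1) * (2 * r)"
  proof -
    have "(norm (x0 - y) + norm (x - y)) powr (p - 1) \<le> (4 * \<theta> * M) powr (p - 1)"
      using n1 p by (intro powr_mono2) auto
    moreover have "norm (x0 - y - (x - y)) \<le> 2 * r" using hn h_def by simp
    ultimately show ?thesis using L by (intro mult_mono) auto
  qed
  also have "\<dots> = ((4 * \<theta>) powr (p - 1) * (2 * \<Lambda>)) * (r * M powr (p - 1))"
    using M th by (simp add: powr_mult)
  also have "\<dots> < (1 / (2 * \<Lambda>)) * (r * M powr (p - 1))"
    using th r M by (intro mult_strict_right_mono) auto
  finally have "c (x0 - y) - c (x - y) < r * M powr (p - 1) / (2 * \<Lambda>)" by simp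
  then show False using lowA mono by linarith
qed

lemma kappa_half:
  assumes mt: "mass_term p 4 \<kappa> \<le> ennreal \<epsilon>" and e: "0 \<le> \<epsilon>" "\<epsilon> \<le> 1"
    and k: "\<kappa> \<ge> 0" and p: "1 < p"
  shows "\<kappa> \<ge> 1/2"
proof (rule ccontr)
  assume "\<not> \<kappa> \<ge> 1/2"
  then have k2: "\<kappa> < 1/2" by simp
  have "\<kappa> \<noteq> 0" using mt unfolding mass_term_def by (auto simp: top_unique)
  then have kp: "\<kappa> > 0" using k by simp
  have T: "4 powr p / \<kappa> powr (p - 1) * \<bar>\<kappa> - 1\<bar> powr p \<le> \<epsilon>"
    using mt \<open>\<kappa> \<noteq> 0\<close> e unfolding mass_term_def by simp
  have a: "\<kappa> powr (p - 1) \<le> 1"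
    using powr_mono2[of "p - 1" \<kappa> 1] p kp k2 by simp
  have a0: "\<kappa> powr (p - 1) > 0" using kp by simp
  have b: "\<bar>\<kappa> - 1\<bar> powr p \<ge> (1/2) powr p"
    using powr_mono2[of p "1/2" "\<bar>\<kappa> - 1\<bar>"] p k2 by simp
  have c: "4 powr p * (1/2) powr p = 2 powr p"
    by (simp add: powr_mult[symmetric])
  have d: "2 powr p \<ge> 2 powr (1::real)"
    using p by (intro powr_mono) auto
  have "4 powr p \<le> 4 powr p / \<kappa> powr (p - 1)"
    using a a0 by (simp add: le_divide_eq)
  then have "4 powr p * (1/2) powr p \<le> 4 powr p / \<kappa> powr (p - 1) * \<bar>\<kappa> - 1\<bar> powr p"
    using b by (intro mult_mono) auto
  then show False using T c d e by simp
qed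

lemma meas_fst: "fst \<in> measurable (borel :: ('a::euclidean_space \<times> 'a) measure) borel"
  by (intro borel_measurable_continuous_onI continuous_intros)

lemma meas_snd: "snd \<in> measurable (borel :: ('a::euclidean_space \<times> 'a) measure) borel"
  by (intro borel_measurable_continuous_onI continuous_intros)

lemma mass_lower:
  fixes \<nu> :: "'a::euclidean_space measure"
  assumes sets: "sets \<nu> = sets borel" and fin: "finite_measure \<nu>"
    and D: "Ddata_one p \<nu> 4 \<le> ennreal \<epsilon>" and e: "0 \<le> \<epsilon>" "\<epsilon> \<le> 1" and p: "1 < p"
    and rho: "0 < \<rho>" and sub: "ball z (2 * \<rho>) \<subseteq> ball 0 4"
  shows "measure \<nu> (ball z (2 * \<rho>)) \<ge>
     unit_ball_vol DIM('a) * \<rho> ^ DIM('a) / 2 - \<epsilon> * measure (lborel :: 'a measure) (ball 0 4) / \<rho> powr p"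
proof -
  define Bm where "Bm = measure (lborel :: 'a measure) (ball 0 4)"
  define \<omega> where "\<omega> = unit_ball_vol DIM('a)"
  define \<kappa> where "\<kappa> = kappa \<nu> 4"
  define A where "A = ball z (2 * \<rho>)"
  define A' where "A' = ball z \<rho>"
  define W where "W = Wpp p (restr \<nu> (ball 0 4)) (density lborel (\<lambda>x. ennreal \<kappa> * indicator (ball 0 4) x))"
  have om: "\<omega> > 0" unfolding \<omega>_def by simp
  have Bm: "Bm = \<omega> * 4 ^ DIM('a)" unfolding Bm_def \<omega>_def using content_ball[of 4 0] by simp
  have Bm0: "Bm > 0" using Bm om by simp
  have k0: "\<kappa> \<ge> 0" unfolding \<kappa>_def kappa_def by simp
  have DD: "Ddata_one p \<nu> 4 = W / ennreal Bm + mass_term p 4 \<kappa>"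
    unfolding Ddata_one_def W_def \<kappa>_def Bm_def by simp
  have "mass_term p 4 \<kappa> \<le> W / ennreal Bm + mass_term p 4 \<kappa>" by (rule add_increasing) auto
  then have mt: "mass_term p 4 \<kappa> \<le> ennreal \<epsilon>" using D DD by (simp only: order_trans)
  have "W / ennreal Bm \<le> W / ennreal Bm + mass_term p 4 \<kappa>" by (rule add_increasing2) auto
  then have Wd: "W / ennreal Bm \<le> ennreal \<epsilon>" using D DD by (simp only: order_trans)
  have kh: "\<kappa> \<ge> 1/2" using kappa_half[OF mt e k0 p] .
  have WB: "W \<le> ennreal (\<epsilon> * Bm)"
  proof -
    have "W = (W / ennreal Bm) * ennreal Bm"
      using Bm0 by (simp add: ennreal_divide_times)
    also have "\<dots> \<le> ennreal \<epsilon> * ennreal Bm" using Wd by (intro mult_right_mono) auto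
    also have "\<dots> = ennreal (\<epsilon> * Bm)" using ennreal_mult'[OF e(1), of Bm] by simp
    finally show ?thesis .
  qed
  have spaceA: "space \<nu> = UNIV" using sets sets_eq_imp_space_eq by fastforce
  have main: "\<rho> powr p * (\<kappa> * (\<omega> * \<rho> ^ DIM('a)) - measure \<nu> A) \<le> \<eta>" if eta: "\<epsilon> * Bm < \<eta>" for \<eta>
  proof -
    have "0 \<le> \<epsilon> * Bm" using e Bm0 by simp
    then have eta0: "0 \<le> \<eta>" using eta by linarith
    have "0 \<le> \<epsilon> * Bm" using e Bm0 by simp
    then have "ennreal (\<epsilon> * Bm) < ennreal \<eta>" using eta by (intro ennreal_lessI) auto
    then have "W < ennreal \<eta>" using WB by (rule le_less_trans[rotated])
    then obtain \<gamma> where g: "\<gamma> \<in> couplings (restr \<nu> (ball 0 4)) (density lborel (\<lambda>x. ennreal \<kappa> * indicator (ball 0 4) x))"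
      and gi: "(\<integral>\<^sup>+ u. ennreal (norm (fst u - snd u) powr p) \<partial>\<gamma>) < ennreal \<eta>"
      unfolding W_def Wpp_def by (auto simp: INF_less_iff)
    have gs: "sets \<gamma> = sets borel" and gf: "distr \<gamma> borel fst = restr \<nu> (ball 0 4)"
      and gsn: "distr \<gamma> borel snd = density lborel (\<lambda>x. ennreal \<kappa> * indicator (ball 0 4) x)"
      using g unfolding couplings_def by auto
    have gsp: "space \<gamma> = UNIV" using gs sets_eq_imp_space_eq by fastforce
    have mf: "fst \<in> measurable \<gamma> borel" using meas_fst measurable_cong_sets[OF gs refl] by blast
    have ms: "snd \<in> measurable \<gamma> borel" using meas_snd measurable_cong_sets[OF gs refl] by blast
    define Far where "Far = {u :: 'a \<times> 'a. \<rho> \<le> norm (fst u - snd u)}"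
    have Farm: "Far \<in> sets \<gamma>"
    proof -
      have "closed Far" unfolding Far_def
        by (intro closed_Collect_le continuous_intros)
      then show ?thesis using gs by simp
    qed
    have e1: "emeasure \<gamma> (snd -` A') = ennreal (\<kappa> * (\<omega> * \<rho> ^ DIM('a)))"
    proof -
      have "emeasure \<gamma> (snd -` A') = emeasure (distr \<gamma> borel snd) A'"
        using emeasure_distr[OF ms, of A'] gsp unfolding A'_def by simp
      also have "\<dots> = (\<integral>\<^sup>+ x. ennreal \<kappa> * indicator (ball 0 4) x * indicator A' x \<partial>lborel)"
        unfolding gsn by (subst emeasure_density) (auto simp: A'_def intro!: borel_measurable_times_ennreal borel_measurable_indicator)
      also have "\<dots> = (\<integral>\<^sup>+ x. ennreal \<kappa> * indicator A' x \<partial>lborel)"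
      proof (intro nn_integral_cong)
        fix x :: 'a
        have "A' \<subseteq> ball 0 4" using sub rho unfolding A'_def by (smt (verit) subset_ball order_trans)
        then show "ennreal \<kappa> * indicator (ball 0 4) x * indicator A' x = ennreal \<kappa> * indicator A' x"
          by (auto simp: indicator_def)
      qed
      also have "\<dots> = ennreal \<kappa> * emeasure lborel A'"
        by (rule nn_integral_cmult_indicator) (simp add: A'_def)
      also have "\<dots> = ennreal (\<kappa> * (\<omega> * \<rho> ^ DIM('a)))"
        unfolding A'_def \<omega>_def using emeasure_ball[of \<rho> z] rho k0 by (simp add: ennreal_mult)
      finally show ?thesis .
    qed
    have e2: "emeasure \<gamma> (fst -` A) = emeasure \<nu> A"
    proof -
      have "emeasure \<gamma> (fst -` A) = emeasure (distr \<gamma> borel fst) A"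
        using emeasure_distr[OF mf, of A] gsp unfolding A_def by simp
      also have "\<dots> = (\<integral>\<^sup>+ x. indicator (ball 0 4) x * indicator A x \<partial>\<nu>)"
        unfolding gf restr_def by (subst emeasure_density) (auto simp: A_def sets measurable_cong_sets[OF sets refl] intro!: borel_measurable_indicator)
      also have "\<dots> = (\<integral>\<^sup>+ x. indicator A x \<partial>\<nu>)"
      proof (intro nn_integral_cong)
        fix x :: 'a
        show "indicator (ball 0 4) x * indicator A x = (indicator A x :: ennreal)"
          using sub unfolding A_def by (auto simp: indicator_def)
      qed
      also have "\<dots> = emeasure \<nu> A" using sets by (simp add: A_def)
      finally show ?thesis .
    qed
    have fAm: "fst -` A \<in> sets \<gamma>"
      using measurable_sets[OF mf, of A] gsp by (simp add: A_def)
    have inc: "snd -` A' \<subseteq> fst -` A \<union> Far"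
    proof
      fix u :: "'a \<times> 'a" assume "u \<in> snd -` A'"
      then have "dist z (snd u) < \<rho>" unfolding A'_def by simp
      moreover have "dist z (fst u) \<le> dist z (snd u) + dist (snd u) (fst u)" by (rule dist_triangle)
      moreover have "dist (snd u) (fst u) = norm (fst u - snd u)" by (simp add: dist_norm norm_minus_commute)
      ultimately show "u \<in> fst -` A \<union> Far" unfolding A_def Far_def by auto
    qed
    have "emeasure \<gamma> (snd -` A') \<le> emeasure \<gamma> (fst -` A \<union> Far)"
      using inc Farm fAm by (intro emeasure_mono) auto
    also have "\<dots> \<le> emeasure \<gamma> (fst -` A) + emeasure \<gamma> Far"
      using Farm fAm by (intro emeasure_subadditive) auto
    finally have s1: "ennreal (\<kappa> * (\<omega> * \<rho> ^ DIM('a))) \<le> emeasure \<nu> A + emeasure \<gamma> Far"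
      using e1 e2 by simp
    have s2: "ennreal (\<rho> powr p) * emeasure \<gamma> Far \<le> ennreal \<eta>"
    proof -
      have "ennreal (\<rho> powr p) * emeasure \<gamma> Far = (\<integral>\<^sup>+ u. ennreal (\<rho> powr p) * indicator Far u \<partial>\<gamma>)"
        using Farm by (simp add: nn_integral_cmult_indicator)
      also have "\<dots> \<le> (\<integral>\<^sup>+ u. ennreal (norm (fst u - snd u) powr p) \<partial>\<gamma>)"
      proof (intro nn_integral_mono)
        fix u :: "'a \<times> 'a"
        show "ennreal (\<rho> powr p) * indicator Far u \<le> ennreal (norm (fst u - snd u) powr p)"
          using rho p by (auto simp: indicator_def Far_def intro!: ennreal_leI powr_mono2)
      qed
      finally show ?thesis using gi by simp
    qed
    have fA: "emeasure \<nu> A = ennreal (measure \<nu> A)"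
      using fin by (simp add: finite_measure.emeasure_eq_measure)
    have "ennreal (\<rho> powr p * (\<kappa> * (\<omega> * \<rho> ^ DIM('a)))) = ennreal (\<rho> powr p) * ennreal (\<kappa> * (\<omega> * \<rho> ^ DIM('a)))"
      by (rule ennreal_mult') simp
    also have "\<dots> \<le> ennreal (\<rho> powr p) * (emeasure \<nu> A + emeasure \<gamma> Far)"
      using s1 by (intro mult_left_mono) auto
    also have "\<dots> = ennreal (\<rho> powr p) * ennreal (measure \<nu> A) + ennreal (\<rho> powr p) * emeasure \<gamma> Far"
      using fA by (simp add: distrib_left)
    also have "\<dots> \<le> ennreal (\<rho> powr p * measure \<nu> A) + ennreal \<eta>"
      using s2 ennreal_mult'[of "\<rho> powr p" "measure \<nu> A"] by (intro add_mono) auto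
    also have "\<dots> = ennreal (\<rho> powr p * measure \<nu> A + \<eta>)"
      using eta0 by (subst ennreal_plus) auto
    finally have "\<rho> powr p * (\<kappa> * (\<omega> * \<rho> ^ DIM('a))) \<le> \<rho> powr p * measure \<nu> A + \<eta>"
      using eta0 by (subst (asm) ennreal_le_iff) auto
    then show ?thesis by (simp add: algebra_simps)
  qed
  have "\<rho> powr p * (\<kappa> * (\<omega> * \<rho> ^ DIM('a)) - measure \<nu> A) \<le> \<epsilon> * Bm"
    using main by (rule dense_ge)
  then have "\<kappa> * (\<omega> * \<rho> ^ DIM('a)) - measure \<nu> A \<le> \<epsilon> * Bm / \<rho> powr p"
    using rho by (simp add: le_divide_eq mult.commute)
  moreover have "\<omega> * \<rho> ^ DIM('a) / 2 \<le> \<kappa> * (\<omega> * \<rho> ^ DIM('a))"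
    using kh om rho by (simp add: mult_right_mono)
  ultimately show ?thesis unfolding A_def Bm_def \<omega>_def by linarith
qed

lemma E_lower:
  fixes \<pi> :: "('a::euclidean_space \<times> 'a) measure" and P :: "'a \<times> 'a \<Rightarrow> 'a"
  assumes gs: "sets \<pi> = sets borel" and mP: "P \<in> measurable borel borel"
    and dst: "distr \<pi> borel P = \<nu>"
    and null: "UNIV - S \<in> null_sets \<pi>"
    and Psharp: "\<And>u. P u \<in> ball 0 4 \<Longrightarrow> u \<in> sharp 4"
    and A: "A \<subseteq> ball 0 4" "open A"
    and bound: "\<And>u. u \<in> S \<Longrightarrow> P u \<in> A \<Longrightarrow> L \<le> f u"
    and L: "0 \<le> L"
  shows "ennreal L * emeasure \<nu> A \<le> (\<integral>\<^sup>+ u\<in>sharp 4. ennreal (f u) \<partial>\<pi>)"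
proof -
  have gsp: "space \<pi> = UNIV" using gs sets_eq_imp_space_eq by fastforce
  have mP': "P \<in> measurable \<pi> borel" using mP measurable_cong_sets[OF gs refl] by blast
  have Am: "A \<in> sets borel" using A by simp
  have PA: "P -` A \<in> sets \<pi>" using measurable_sets[OF mP' Am] gsp by simp
  have "emeasure \<nu> A = emeasure \<pi> (P -` A)"
    using emeasure_distr[OF mP' Am] gsp dst by simp
  then have "ennreal L * emeasure \<nu> A = (\<integral>\<^sup>+ u. ennreal L * indicator (P -` A) u \<partial>\<pi>)"
    using PA by (simp add: nn_integral_cmult_indicator)
  also have "\<dots> \<le> (\<integral>\<^sup>+ u. ennreal (f u) * indicator (sharp 4) u \<partial>\<pi>)"
  proof (rule nn_integral_mono_AE)
    have "AE u in \<pi>. u \<notin> UNIV - S" using null by (rule AE_not_in)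
    then show "AE u in \<pi>. ennreal L * indicator (P -` A) u \<le> ennreal (f u) * indicator (sharp 4) u"
    proof (rule AE_mp, intro AE_I2 impI)
      fix u assume "u \<notin> UNIV - S"
      then have uS: "u \<in> S" by simp
      show "ennreal L * indicator (P -` A) u \<le> ennreal (f u) * indicator (sharp 4) u"
      proof (cases "P u \<in> A")
        case True
        then have "P u \<in> ball 0 4" using A by auto
        then have "u \<in> sharp 4" by (rule Psharp)
        moreover have "L \<le> f u" using bound uS True by simp
        ultimately show ?thesis using True by (simp add: indicator_def ennreal_leI)
      next
        case False
        then show ?thesis by (simp add: indicator_def)
      qed
    qed
  qed
  finally show ?thesis by simp
qed

lemma alg:
  fixes \<omega> Bm \<epsilon> p d \<rho> L nA :: real
  assumes "\<omega> > 0" "Bm > 0" "\<epsilon> \<ge> 0" "\<rho> > 0" "L \<ge> 0"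
    and m: "nA \<ge> \<omega> * \<rho> powr d / 2 - \<epsilon> * Bm / \<rho> powr p"
    and e: "L * nA \<le> \<epsilon> * Bm"
  shows "\<rho> powr (p + d) \<le> 4 * \<epsilon> * Bm / \<omega> \<or> L * \<omega> * \<rho> powr d / 4 \<le> \<epsilon> * Bm"
proof (cases "\<epsilon> * Bm / \<rho> powr p \<ge> \<omega> * \<rho> powr d / 4")
  case True
  then have "\<rho> powr p * (\<omega> * \<rho> powr d) \<le> 4 * (\<epsilon> * Bm)"
    using assms by (simp add: field_simps)
  then have "\<omega> * \<rho> powr (p + d) \<le> 4 * \<epsilon> * Bm"
    by (simp add: powr_add algebra_simps)
  then show ?thesis using assms by (simp add: field_simps)
next
  case False
  then have "nA \<ge> \<omega> * \<rho> powr d / 4" using m by linarith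
  then have "L * (\<omega> * \<rho> powr d / 4) \<le> L * nA" using assms by (intro mult_left_mono) auto
  then show ?thesis using e by simp
qed

lemma one_side:
  fixes \<pi> :: "('a::euclidean_space \<times> 'a) measure" and P :: "'a \<times> 'a \<Rightarrow> 'a"
    and \<nu> :: "'a measure"
  assumes p: "1 < p" and L: "\<Lambda> \<ge> 1"
    and sets: "sets \<nu> = sets borel" and fin: "finite_measure \<nu>"
    and D: "Ddata_one p \<nu> 4 \<le> ennreal \<epsilon>" and e: "0 \<le> \<epsilon>" "\<epsilon> \<le> 1"
    and gs: "sets \<pi> = sets borel" and mP: "P \<in> measurable borel borel"
    and dst: "distr \<pi> borel P = \<nu>"
    and null: "UNIV - S \<in> null_sets \<pi>"
    and Psharp: "\<And>u. P u \<in> ball 0 4 \<Longrightarrow> u \<in> sharp 4"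
    and Eb: "(\<integral>\<^sup>+ u\<in>sharp 4. ennreal (f u) \<partial>\<pi>) \<le> ennreal (\<epsilon> * measure (lborel :: 'a measure) (ball 0 4))"
    and q0: "q0 \<in> ball 0 3" and M: "M > 0" and u0: "norm u0 = 1"
    and th: "0 < \<theta>" and de: "0 < \<delta>" "\<delta> \<le> 1"
    and key: "\<And>r u. 0 < r \<Longrightarrow> r \<le> \<theta> * M \<Longrightarrow> u \<in> S \<Longrightarrow> norm (P u - (q0 + r *\<^sub>R u0)) < \<delta> * r
        \<Longrightarrow> (\<theta> * M) powr p / \<Lambda> \<le> f u"
    and s1: "\<epsilon> < unit_ball_vol DIM('a) * (\<delta> / 4) powr (p + DIM('a)) / (4 * measure (lborel :: 'a measure) (ball 0 4))"
    and s2: "\<epsilon> < (1/2) powr p * unit_ball_vol DIM('a) * (\<delta> / 4) powr DIM('a) / (4 * \<Lambda> * measure (lborel :: 'a measure) (ball 0 4))"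
  shows "M powr (p + DIM('a)) \<le> max (4 * measure (lborel :: 'a measure) (ball 0 4) / (unit_ball_vol DIM('a) * (\<delta> * \<theta> / 2) powr (p + DIM('a))))
      (4 * \<Lambda> * measure (lborel :: 'a measure) (ball 0 4) / (\<theta> powr p * unit_ball_vol DIM('a) * (\<delta> * \<theta> / 2) powr DIM('a))) * \<epsilon>"
proof -
  define Bm where "Bm = measure (lborel :: 'a measure) (ball 0 4)"
  define \<omega> where "\<omega> = unit_ball_vol DIM('a)"
  define d where "d = real DIM('a)"
  define c0 where "c0 = \<delta> * \<theta> / 2"
  have om: "\<omega> > 0" unfolding \<omega>_def by simp
  have Bm: "Bm = \<omega> * 4 ^ DIM('a)" unfolding Bm_def \<omega>_def using content_ball[of 4 0] by simp
  have Bm0: "Bm > 0" using Bm om by simp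
  have c00: "c0 > 0" using de th by (simp add: c0_def)
  define r where "r = min (\<theta> * M) (1/2)"
  have r0: "r > 0" using th M by (simp add: r_def)
  have rle: "r \<le> \<theta> * M" "r \<le> 1/2" by (auto simp: r_def)
  define \<rho> where "\<rho> = \<delta> * r / 2"
  have rho0: "\<rho> > 0" using de r0 by (simp add: \<rho>_def)
  define z0 where "z0 = q0 + r *\<^sub>R u0"
  define A where "A = ball z0 (2 * \<rho>)"
  have dr: "\<delta> * r \<le> 1/2"
  proof -
    have "\<delta> * r \<le> 1 * r" using de r0 by (intro mult_right_mono) auto
    then show ?thesis using rle by linarith
  qed
  have Asub: "A \<subseteq> ball 0 4"
  proof
    fix v assume "v \<in> A"
    then have "dist z0 v < \<delta> * r" unfolding A_def \<rho>_def by simp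
    moreover have "norm v \<le> norm z0 + dist z0 v"
      by (metis dist_0_norm dist_commute dist_triangle)
    moreover have "norm z0 \<le> norm q0 + r" unfolding z0_def using u0 r0
      using norm_triangle_ineq[of q0 "r *\<^sub>R u0"] by simp
    moreover have "norm q0 < 3" using q0 by simp
    ultimately show "v \<in> ball 0 4" using rle dr by simp
  qed
  have mass: "measure \<nu> A \<ge> \<omega> * \<rho> powr d / 2 - \<epsilon> * Bm / \<rho> powr p"
    using mass_lower[OF sets fin D e p rho0, of z0] Asub rho0
    unfolding A_def \<omega>_def Bm_def d_def by (simp add: powr_realpow)
  define Lb where "Lb = (\<theta> * M) powr p / \<Lambda>"
  have Lb0: "Lb \<ge> 0" unfolding Lb_def using L by simp
  have "ennreal Lb * emeasure \<nu> A \<le> (\<integral>\<^sup>+ u\<in>sharp 4. ennreal (f u) \<partial>\<pi>)"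
  proof (rule E_lower[OF gs mP dst null Psharp Asub _ _ Lb0])
    show "open A" by (simp add: A_def)
    fix u assume "u \<in> S" "P u \<in> A"
    then have "norm (P u - (q0 + r *\<^sub>R u0)) < \<delta> * r"
      unfolding A_def z0_def \<rho>_def by (simp add: dist_norm norm_minus_commute)
    then show "Lb \<le> f u" unfolding Lb_def using key[OF r0 rle(1) \<open>u \<in> S\<close>] by simp
  qed
  also have "\<dots> \<le> ennreal (\<epsilon> * Bm)" using Eb unfolding Bm_def .
  finally have "ennreal Lb * ennreal (measure \<nu> A) \<le> ennreal (\<epsilon> * Bm)"
    using fin by (simp add: finite_measure.emeasure_eq_measure)
  then have "ennreal (Lb * measure \<nu> A) \<le> ennreal (\<epsilon> * Bm)"
    using Lb0 by (simp add: ennreal_mult')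
  then have EE: "Lb * measure \<nu> A \<le> \<epsilon> * Bm" using e Bm0 by (subst (asm) ennreal_le_iff) auto
  have alt: "\<rho> powr (p + d) \<le> 4 * \<epsilon> * Bm / \<omega> \<or> Lb * \<omega> * \<rho> powr d / 4 \<le> \<epsilon> * Bm"
    by (rule alg[OF om Bm0 e(1) rho0 Lb0 mass EE])
  define K1 where "K1 = 4 * Bm / (\<omega> * c0 powr (p + d))"
  define K2 where "K2 = 4 * \<Lambda> * Bm / (\<theta> powr p * \<omega> * c0 powr d)"
  have m1: "K1 * \<epsilon> \<le> max K1 K2 * \<epsilon>" by (rule mult_right_mono[OF max.cobounded1 e(1)])
  have m2: "K2 * \<epsilon> \<le> max K1 K2 * \<epsilon>" by (rule mult_right_mono[OF max.cobounded2 e(1)])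
  have "M powr (p + d) \<le> max K1 K2 * \<epsilon>"
  proof (cases "\<theta> * M \<le> 1/2")
    case True
    then have rr: "r = \<theta> * M" by (simp add: r_def)
    have rho: "\<rho> = c0 * M" unfolding \<rho>_def rr c0_def by simp
    have Mp: "M powr (p + d) = M powr p * M powr d" by (simp add: powr_add)
    show ?thesis
    proof (cases "\<rho> powr (p + d) \<le> 4 * \<epsilon> * Bm / \<omega>")
      case True
      then have "c0 powr (p + d) * M powr (p + d) \<le> 4 * \<epsilon> * Bm / \<omega>"
        unfolding rho using c00 M by (simp add: powr_mult)
      then have "M powr (p + d) \<le> 4 * Bm / (\<omega> * c0 powr (p + d)) * \<epsilon>"
        using c00 om by (simp add: field_simps)
      then show ?thesis using m1 unfolding K1_def by linarith
    next
      case False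
      then have "Lb * \<omega> * \<rho> powr d / 4 \<le> \<epsilon> * Bm" using alt by simp
      then have "\<theta> powr p * M powr p / \<Lambda> * \<omega> * (c0 powr d * M powr d) / 4 \<le> \<epsilon> * Bm"
        unfolding Lb_def rho using th M c00 by (simp add: powr_mult)
      then have "(\<theta> powr p * \<omega> * c0 powr d) * M powr (p + d) \<le> 4 * \<Lambda> * \<epsilon> * Bm"
        using L unfolding Mp by (simp add: field_simps)
      then have "M powr (p + d) \<le> 4 * \<Lambda> * Bm / (\<theta> powr p * \<omega> * c0 powr d) * \<epsilon>"
        using c00 om th by (simp add: field_simps)
      then show ?thesis using m2 unfolding K2_def by linarith
    qed
  next
    case False
    then have rr: "r = 1/2" by (simp add: r_def)
    have rho: "\<rho> = \<delta> / 4" unfolding \<rho>_def rr by simp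
    show ?thesis
    proof (cases "\<rho> powr (p + d) \<le> 4 * \<epsilon> * Bm / \<omega>")
      case True
      then have "\<omega> * (\<delta> / 4) powr (p + d) / (4 * Bm) \<le> \<epsilon>"
        unfolding rho using om Bm0 by (simp add: field_simps)
      then show ?thesis using s1 unfolding \<omega>_def Bm_def d_def by simp
    next
      case False
      then have a: "Lb * \<omega> * \<rho> powr d / 4 \<le> \<epsilon> * Bm" using alt by simp
      have "(1/2) powr p \<le> (\<theta> * M) powr p" using \<open>\<not> \<theta> * M \<le> 1/2\<close> p
        by (intro powr_mono2) auto
      then have "(1/2) powr p / \<Lambda> \<le> Lb" unfolding Lb_def using L by (simp add: divide_right_mono)
      then have "(1/2) powr p / \<Lambda> * \<omega> * \<rho> powr d / 4 \<le> Lb * \<omega> * \<rho> powr d / 4"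
        using om by (intro divide_right_mono mult_right_mono) auto
      then have b1: "(1/2) powr p / \<Lambda> * \<omega> * (\<delta> / 4) powr d / 4 \<le> Lb * \<omega> * (\<delta> / 4) powr d / 4"
        using rho by simp
      have b2: "Lb * \<omega> * (\<delta> / 4) powr d / 4 \<le> \<epsilon> * Bm" using a rho by simp
      have "(1/2) powr p / \<Lambda> * \<omega> * (\<delta> / 4) powr d / 4 \<le> \<epsilon> * Bm" by (rule order_trans[OF b1 b2])
      then have "(1/2) powr p * \<omega> * (\<delta> / 4) powr d / (4 * \<Lambda> * Bm) \<le> \<epsilon>"
        using L Bm0 by (simp add: field_simps)
      then show ?thesis using s2 unfolding \<omega>_def Bm_def d_def by simp
    qed
  qed
  then show ?thesis unfolding K1_def K2_def c0_def d_def Bm_def \<omega>_def by simp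
qed

lemma cost_props:
  fixes c :: "'a::euclidean_space \<Rightarrow> real"
  assumes ca: "cost_assms p \<Lambda> c g" and L: "\<Lambda> \<ge> 1"
  shows "\<And>x s. 0 \<le> s \<Longrightarrow> s \<le> 1 \<Longrightarrow> c (s *\<^sub>R x) \<le> s * c x"
    and "\<And>x. norm x powr p / \<Lambda> \<le> c x"
    and "\<And>x y. \<bar>c x - c y\<bar> \<le> \<Lambda> * (norm x + norm y) powr (p - 1) * norm (x - y)"
proof -
  have i: "\<And>x y s. 0 \<le> s \<Longrightarrow> s \<le> 1 \<Longrightarrow>
        s * (1 - s) * Vp p x y / \<Lambda> + c (s *\<^sub>R x + (1 - s) *\<^sub>R y) \<le> s * c x + (1 - s) * c y"
    and ii: "\<And>x. norm x powr p / \<Lambda> \<le> c x \<and> c x \<le> \<Lambda> * norm x powr p"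
    and iii: "\<And>x y. \<bar>c x - c y\<bar> \<le> \<Lambda> * (norm x + norm y) powr (p - 1) * norm (x - y)"
    using ca unfolding cost_assms_def by auto
  have c0: "c 0 = 0" using ii[of 0] by simp
  show "\<And>x. norm x powr p / \<Lambda> \<le> c x" using ii by simp
  show "\<And>x y. \<bar>c x - c y\<bar> \<le> \<Lambda> * (norm x + norm y) powr (p - 1) * norm (x - y)" by (rule iii)
  fix x :: 'a and s :: real
  assume s: "0 \<le> s" "s \<le> 1"
  have "Vp p x 0 \<ge> 0" unfolding Vp_def by simp
  then have "s * (1 - s) * Vp p x 0 / \<Lambda> \<ge> 0" using s L by simp
  moreover have "s * (1 - s) * Vp p x 0 / \<Lambda> + c (s *\<^sub>R x + (1 - s) *\<^sub>R 0) \<le> s * c x + (1 - s) * c 0"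
    using i[OF s] by blast
  ultimately show "c (s *\<^sub>R x) \<le> s * c x" using c0 by simp
qed

lemma cyc2:
  assumes "c_cyclically_monotone c S" "a \<in> S" "b \<in> S"
  shows "c (fst a - snd a) + c (fst b - snd b) \<le> c (fst a - snd b) + c (fst b - snd a)"
proof -
  define z where "z = (\<lambda>i::nat. if i = 0 then a else b)"
  have "(\<Sum>i<2. c (fst (z i) - snd (z i))) \<le> (\<Sum>i<2. c (fst (z i) - snd (z ((i + 1) mod 2))))"
    using assms(1) unfolding c_cyclically_monotone_def
    by (erule_tac x=2 in allE, erule_tac x=z in allE) (auto simp: z_def assms)
  then show ?thesis by (simp add: numeral_2_eq_2 z_def)
qed

lemma main_fixed:
  fixes p \<Lambda> :: real and c :: "'a::euclidean_space \<Rightarrow> real" and lam mu :: "'a measure"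
    and pi :: "('a \<times> 'a) measure"
  assumes p: "1 < p" and L: "\<Lambda> \<ge> 1"
    and th: "0 < \<theta>" "\<theta> \<le> 1/4" "(4 * \<theta>) powr (p - 1) * (2 * \<Lambda>) < 1 / (2 * \<Lambda>)"
    and de: "0 < \<delta>" "\<delta> \<le> 1" "\<Lambda> * 3 powr (p - 1) * \<delta> \<le> 1 / (2 * \<Lambda>)"
    and Kdef: "K = max (4 * measure (lborel :: 'a measure) (ball 0 4) / (unit_ball_vol DIM('a) * (\<delta> * \<theta> / 2) powr (p + DIM('a))))
      (4 * \<Lambda> * measure (lborel :: 'a measure) (ball 0 4) / (\<theta> powr p * unit_ball_vol DIM('a) * (\<delta> * \<theta> / 2) powr DIM('a)))"
    and Cdef: "C = K powr (1 / (p + DIM('a)))"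
    and e00: "0 < \<epsilon>0" and e01: "\<epsilon>0 \<le> 1" and e0K: "K * \<epsilon>0 < 1"
    and s1: "\<epsilon>0 < unit_ball_vol DIM('a) * (\<delta> / 4) powr (p + DIM('a)) / (4 * measure (lborel :: 'a measure) (ball 0 4))"
    and s2: "\<epsilon>0 < (1/2) powr p * unit_ball_vol DIM('a) * (\<delta> / 4) powr DIM('a) / (4 * \<Lambda> * measure (lborel :: 'a measure) (ball 0 4))"
  shows "cost_assms p \<Lambda> c g \<and>
     sets lam = sets borel \<and> sets mu = sets borel \<and> finite_measure lam \<and> finite_measure mu \<and>
     emeasure lam UNIV = emeasure mu UNIV \<and>
     pi \<in> couplings lam mu \<and> c_cyclically_monotone c (Spt pi) \<and>
     Eexc c pi 4 + Ddata p lam mu 4 \<le> ennreal \<epsilon>0 \<Longrightarrow>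
     (x, y) \<in> Spt pi \<and> (x \<in> ball 0 3 \<or> y \<in> ball 0 3) \<Longrightarrow>
            norm (x - y) \<le> C * enn2real (Eexc c pi 4 + Ddata p lam mu 4) powr (1 / (p + real DIM('a))) \<and>
            (\<forall>t\<in>{0..1}. (1 - t) *\<^sub>R x + t *\<^sub>R y \<in> ball 0 4)"
proof -
  assume H: "cost_assms p \<Lambda> c g \<and>
     sets lam = sets borel \<and> sets mu = sets borel \<and> finite_measure lam \<and> finite_measure mu \<and>
     emeasure lam UNIV = emeasure mu UNIV \<and>
     pi \<in> couplings lam mu \<and> c_cyclically_monotone c (Spt pi) \<and>
     Eexc c pi 4 + Ddata p lam mu 4 \<le> ennreal \<epsilon>0"
  assume X: "(x, y) \<in> Spt pi \<and> (x \<in> ball 0 3 \<or> y \<in> ball 0 3)"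
  have ca: "cost_assms p \<Lambda> c g" and slam: "sets lam = sets borel" and smu: "sets mu = sets borel"
    and flam: "finite_measure lam" and fmu: "finite_measure mu" and cpl: "pi \<in> couplings lam mu"
    and cyc: "c_cyclically_monotone c (Spt pi)" and TT: "Eexc c pi 4 + Ddata p lam mu 4 \<le> ennreal \<epsilon>0"
    using H by auto
  have xyS: "(x, y) \<in> Spt pi" and xy3: "x \<in> ball 0 3 \<or> y \<in> ball 0 3" using X by auto
  define T where "T = Eexc c pi 4 + Ddata p lam mu 4"
  define \<epsilon> where "\<epsilon> = enn2real T"
  define d where "d = real DIM('a)"
  define Bm where "Bm = measure (lborel :: 'a measure) (ball 0 4)"
  have Bm0: "Bm > 0" unfolding Bm_def using content_ball[of 4 "0::'a"] by simp
  have TT': "T \<le> ennreal \<epsilon>0" using TT unfolding T_def .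
  have Ttop: "T < top" by (rule le_less_trans[OF TT' ennreal_less_top])
  have Teq: "T = ennreal \<epsilon>" unfolding \<epsilon>_def using Ttop by simp
  have e0: "0 \<le> \<epsilon>" unfolding \<epsilon>_def by simp
  have ee0: "\<epsilon> \<le> \<epsilon>0" using TT' Teq e00 by simp
  have ee1: "\<epsilon> \<le> 1" using ee0 e01 by simp
  have EE: "Eexc c pi 4 \<le> ennreal \<epsilon>"
  proof -
    have "Eexc c pi 4 \<le> T" unfolding T_def by (rule add_increasing2) auto
    then show ?thesis using Teq by simp
  qed
  have DD: "Ddata p lam mu 4 \<le> ennreal \<epsilon>"
  proof -
    have "Ddata p lam mu 4 \<le> T" unfolding T_def by (rule add_increasing) auto
    then show ?thesis using Teq by simp
  qed
  have Dlam: "Ddata_one p lam 4 \<le> ennreal \<epsilon>"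
  proof -
    have "Ddata_one p lam 4 \<le> Ddata p lam mu 4" unfolding Ddata_def by (rule add_increasing2) auto
    then show ?thesis using DD by simp
  qed
  have Dmu: "Ddata_one p mu 4 \<le> ennreal \<epsilon>"
  proof -
    have "Ddata_one p mu 4 \<le> Ddata p lam mu 4" unfolding Ddata_def by (rule add_increasing) auto
    then show ?thesis using DD by simp
  qed
  define I where "I = (\<integral>\<^sup>+ z\<in>sharp 4. ennreal (c (fst z - snd z)) \<partial>pi)"
  have Eb: "I \<le> ennreal (\<epsilon> * Bm)"
  proof -
    have Ed: "I / ennreal Bm \<le> ennreal \<epsilon>" using EE unfolding Eexc_def I_def Bm_def by simp
    have "I = (I / ennreal Bm) * ennreal Bm"
      using Bm0 by (simp add: ennreal_divide_times)
    also have "\<dots> \<le> ennreal \<epsilon> * ennreal Bm" using Ed by (intro mult_right_mono) auto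
    also have "\<dots> = ennreal (\<epsilon> * Bm)" using ennreal_mult'[OF e0, of Bm] by simp
    finally show ?thesis .
  qed
  have gs: "sets pi = sets borel" and dfst: "distr pi borel fst = lam" and dsnd: "distr pi borel snd = mu"
    using cpl unfolding couplings_def by auto
  have null: "UNIV - Spt pi \<in> null_sets pi" by (rule Spt_null[OF gs])
  note cp = cost_props[OF ca L]
  have cpos: "\<And>z. 0 \<le> c z"
  proof -
    fix z show "0 \<le> c z" using cp(2)[of z] L by (smt (verit) divide_nonneg_pos powr_ge_zero)
  qed
  define M where "M = norm (x - y)"
  show ?thesis
  proof (cases "M = 0")
    case True
    then have "x = y" unfolding M_def by simp
    moreover have "0 \<le> C * enn2real T powr (1 / (p + real DIM('a)))"
      unfolding Cdef by simp
    ultimately show ?thesis using xy3 by (auto simp: T_def scaleR_left_distrib[symmetric])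
  next
    case False
    then have M0: "M > 0" unfolding M_def by simp
    have Mpow: "M powr (p + DIM('a)) \<le> K * \<epsilon>"
    proof (cases "x \<in> ball 0 3")
      case True
      define u0 where "u0 = (1 / M) *\<^sub>R (y - x)"
      have u0n: "norm u0 = 1" unfolding u0_def M_def using M0 M_def by (simp add: norm_minus_commute)
      show ?thesis unfolding Kdef
      proof (rule one_side[OF p L slam flam Dlam e0 ee1 gs _ dfst null _ Eb[unfolded I_def Bm_def] True M0 u0n th(1) de(1) de(2)])
        show "(fst :: 'a \<times> 'a \<Rightarrow> 'a) \<in> borel_measurable borel" by (rule meas_fst)
        show "\<And>u :: 'a \<times> 'a. fst u \<in> ball 0 4 \<Longrightarrow> u \<in> sharp 4" by (auto simp: sharp_def)
        show "\<epsilon> < unit_ball_vol DIM('a) * (\<delta> / 4) powr (p + DIM('a)) / (4 * measure (lborel :: 'a measure) (ball 0 4))"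
          using s1 ee0 by simp
        show "\<epsilon> < (1/2) powr p * unit_ball_vol DIM('a) * (\<delta> / 4) powr DIM('a) / (4 * \<Lambda> * measure (lborel :: 'a measure) (ball 0 4))"
          using s2 ee0 by simp
        fix r and u :: "'a \<times> 'a"
        assume r: "0 < r" "r \<le> \<theta> * M" and uS: "u \<in> Spt pi" and un: "norm (fst u - (x + r *\<^sub>R u0)) < \<delta> * r"
        have mono: "c (x - y) + c (fst u - snd u) \<le> c (x - snd u) + c (fst u - y)"
          using cyc2[OF cyc xyS uS] by simp
        have un': "norm (fst u - (x + (r / M) *\<^sub>R (y - x))) < \<delta> * r" using un unfolding u0_def by simp
        have gt: "norm (fst u - snd u) > \<theta> * M"
          by (rule core[OF p L cp(1) cp(2) cp(3) mono M_def M0 r th de un'])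
        have "(\<theta> * M) powr p \<le> norm (fst u - snd u) powr p"
          using gt th M0 p by (intro powr_mono2) auto
        then have "(\<theta> * M) powr p / \<Lambda> \<le> norm (fst u - snd u) powr p / \<Lambda>"
          using L by (intro divide_right_mono) auto
        then show "(\<theta> * M) powr p / \<Lambda> \<le> c (fst u - snd u)" using cp(2)[of "fst u - snd u"] by linarith
      qed
    next
      case False
      then have y3: "y \<in> ball 0 3" using xy3 by simp
      define u0 where "u0 = (1 / M) *\<^sub>R (x - y)"
      have u0n: "norm u0 = 1" unfolding u0_def M_def using M0 M_def by simp
      define c' where "c' = (\<lambda>z. c (- z))"
      have cv': "\<And>z s. 0 \<le> s \<Longrightarrow> s \<le> 1 \<Longrightarrow> c' (s *\<^sub>R z) \<le> s * c' z"
        unfolding c'_def using cp(1) by (metis scaleR_minus_right)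
      have lo': "\<And>z. norm z powr p / \<Lambda> \<le> c' z" unfolding c'_def using cp(2) by (metis norm_minus_cancel)
      have li': "\<And>a b. \<bar>c' a - c' b\<bar> \<le> \<Lambda> * (norm a + norm b) powr (p - 1) * norm (a - b)"
      proof -
        fix a b :: 'a
        have "\<bar>c (- a) - c (- b)\<bar> \<le> \<Lambda> * (norm (- a) + norm (- b)) powr (p - 1) * norm (- a - - b)"
          by (rule cp(3))
        moreover have "norm (- a - - b) = norm (a - b)" by (metis minus_diff_eq minus_diff_minus norm_minus_cancel)
        ultimately show "\<bar>c' a - c' b\<bar> \<le> \<Lambda> * (norm a + norm b) powr (p - 1) * norm (a - b)"
          unfolding c'_def by simp
      qed
      have MM: "M = norm (y - x)" unfolding M_def by (simp add: norm_minus_commute)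
      show ?thesis unfolding Kdef
      proof (rule one_side[OF p L smu fmu Dmu e0 ee1 gs _ dsnd null _ Eb[unfolded I_def Bm_def] y3 M0 u0n th(1) de(1) de(2)])
        show "(snd :: 'a \<times> 'a \<Rightarrow> 'a) \<in> borel_measurable borel" by (rule meas_snd)
        show "\<And>u :: 'a \<times> 'a. snd u \<in> ball 0 4 \<Longrightarrow> u \<in> sharp 4" by (auto simp: sharp_def)
        show "\<epsilon> < unit_ball_vol DIM('a) * (\<delta> / 4) powr (p + DIM('a)) / (4 * measure (lborel :: 'a measure) (ball 0 4))"
          using s1 ee0 by simp
        show "\<epsilon> < (1/2) powr p * unit_ball_vol DIM('a) * (\<delta> / 4) powr DIM('a) / (4 * \<Lambda> * measure (lborel :: 'a measure) (ball 0 4))"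
          using s2 ee0 by simp
        fix r and u :: "'a \<times> 'a"
        assume r: "0 < r" "r \<le> \<theta> * M" and uS: "u \<in> Spt pi" and un: "norm (snd u - (y + r *\<^sub>R u0)) < \<delta> * r"
        have mono0: "c (x - y) + c (fst u - snd u) \<le> c (x - snd u) + c (fst u - y)"
          using cyc2[OF cyc xyS uS] by simp
        have mono: "c' (y - x) + c' (snd u - fst u) \<le> c' (y - fst u) + c' (snd u - x)"
          using mono0 unfolding c'_def by (simp add: minus_diff_eq add.commute)
        have un': "norm (snd u - (y + (r / M) *\<^sub>R (x - y))) < \<delta> * r" using un unfolding u0_def by simp
        have gt: "norm (snd u - fst u) > \<theta> * M"
          by (rule core[OF p L cv' lo' li' mono MM M0 r th de un'])
        then have gt': "norm (fst u - snd u) > \<theta> * M" by (simp add: norm_minus_commute)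
        have "(\<theta> * M) powr p \<le> norm (fst u - snd u) powr p"
          using gt' th M0 p by (intro powr_mono2) auto
        then have "(\<theta> * M) powr p / \<Lambda> \<le> norm (fst u - snd u) powr p / \<Lambda>"
          using L by (intro divide_right_mono) auto
        then show "(\<theta> * M) powr p / \<Lambda> \<le> c (fst u - snd u)" using cp(2)[of "fst u - snd u"] by linarith
      qed
    qed
    have K0: "K \<ge> 0" unfolding Kdef using th de L by (simp add: le_max_iff_disj)
    have pd: "p + real DIM('a) > 0" using p by simp
    have "M = (M powr (p + DIM('a))) powr (1 / (p + DIM('a)))"
      using M0 pd by (simp add: powr_powr)
    also have "\<dots> \<le> (K * \<epsilon>) powr (1 / (p + DIM('a)))"
      using Mpow pd by (intro powr_mono2) auto
    also have "\<dots> = C * \<epsilon> powr (1 / (p + real DIM('a)))"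
      unfolding Cdef using K0 e0 by (simp add: powr_mult)
    finally have bnd: "M \<le> C * enn2real T powr (1 / (p + real DIM('a)))" unfolding \<epsilon>_def .
    have M1: "M < 1"
    proof (rule ccontr)
      assume "\<not> M < 1"
      then have "1 \<le> M powr (p + DIM('a))" using pd by (intro ge_one_powr_ge_zero) auto
      moreover have "K * \<epsilon> \<le> K * \<epsilon>0" using K0 ee0 by (intro mult_left_mono) auto
      ultimately show False using Mpow e0K by linarith
    qed
    have seg: "\<forall>t\<in>{0..1}. (1 - t) *\<^sub>R x + t *\<^sub>R y \<in> ball 0 4"
    proof
      fix t :: real assume t: "t \<in> {0..1}"
      show "(1 - t) *\<^sub>R x + t *\<^sub>R y \<in> ball 0 4"
      proof (cases "x \<in> ball 0 3")
        case True
        have eq: "(1 - t) *\<^sub>R x + t *\<^sub>R y = x + t *\<^sub>R (y - x)" by (simp add: algebra_simps)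
        have "norm (t *\<^sub>R (y - x)) \<le> M" using t unfolding M_def
          by (simp add: norm_minus_commute mult_left_le_one_le)
        then have "norm (x + t *\<^sub>R (y - x)) < 4"
          using True M1 norm_triangle_ineq[of x "t *\<^sub>R (y - x)"] by simp
        then show ?thesis using eq by simp
      next
        case False
        then have y3: "y \<in> ball 0 3" using xy3 by simp
        have eq: "(1 - t) *\<^sub>R x + t *\<^sub>R y = y + (1 - t) *\<^sub>R (x - y)" by (simp add: algebra_simps)
        have "norm ((1 - t) *\<^sub>R (x - y)) \<le> M" using t unfolding M_def
          by (simp add: mult_left_le_one_le)
        then have "norm (y + (1 - t) *\<^sub>R (x - y)) < 4"
          using y3 M1 norm_triangle_ineq[of y "(1 - t) *\<^sub>R (x - y)"] by simp
        then show ?thesis using eq by simp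
      qed
    qed
    show ?thesis using bnd seg unfolding M_def T_def by simp
  qed
qed

theorem lemma3p1:
  fixes p \<Lambda> :: real
  assumes "1 < p" and "\<Lambda> \<ge> 1"
  shows "\<exists>\<epsilon>0>0. \<exists>C>0. \<forall>(c :: 'a::euclidean_space \<Rightarrow> real) g (lam :: 'a measure) (mu :: 'a measure)
            (pi :: ('a \<times> 'a) measure).
     cost_assms p \<Lambda> c g \<and>
     sets lam = sets borel \<and> sets mu = sets borel \<and> finite_measure lam \<and> finite_measure mu \<and>
     emeasure lam UNIV = emeasure mu UNIV \<and>
     pi \<in> couplings lam mu \<and> c_cyclically_monotone c (Spt pi) \<and>
     Eexc c pi 4 + Ddata p lam mu 4 \<le> ennreal \<epsilon>0
     \<longrightarrow> (\<forall>x y. (x, y) \<in> Spt pi \<and> (x \<in> ball 0 3 \<or> y \<in> ball 0 3) \<longrightarrow>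
            norm (x - y) \<le> C * enn2real (Eexc c pi 4 + Ddata p lam mu 4) powr (1 / (p + real DIM('a))) \<and>
            (\<forall>t\<in>{0..1}. (1 - t) *\<^sub>R x + t *\<^sub>R y \<in> ball 0 4))"
proof -
  note p = assms(1) and L = assms(2)
  define Bm where "Bm = measure (lborel :: 'a measure) (ball 0 4)"
  define \<omega> where "\<omega> = unit_ball_vol DIM('a)"
  define a where "a = (1 / (8 * \<Lambda>^2)) powr (1 / (p - 1))"
  define \<theta> where "\<theta> = a / 4"
  define \<delta> where "\<delta> = 1 / (2 * \<Lambda>^2 * 3 powr (p - 1))"
  define K where "K = max (4 * measure (lborel :: 'a measure) (ball 0 4) / (unit_ball_vol DIM('a) * (\<delta> * \<theta> / 2) powr (p + DIM('a))))
      (4 * \<Lambda> * measure (lborel :: 'a measure) (ball 0 4) / (\<theta> powr p * unit_ball_vol DIM('a) * (\<delta> * \<theta> / 2) powr DIM('a)))"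
  define C where "C = K powr (1 / (p + DIM('a)))"
  define e1 where "e1 = unit_ball_vol DIM('a) * (\<delta> / 4) powr (p + DIM('a)) / (4 * measure (lborel :: 'a measure) (ball 0 4))"
  define e2 where "e2 = (1/2) powr p * unit_ball_vol DIM('a) * (\<delta> / 4) powr DIM('a) / (4 * \<Lambda> * measure (lborel :: 'a measure) (ball 0 4))"
  define \<epsilon>0 where "\<epsilon>0 = min 1 (min (e1 / 2) (min (e2 / 2) (1 / (2 * K))))"
  have om: "\<omega> > 0" unfolding \<omega>_def by simp
  have Bm0: "Bm > 0" unfolding Bm_def using content_ball[of 4 "0::'a"] by simp
  have L0: "\<Lambda> > 0" using L by simp
  have a0: "a > 0" unfolding a_def using L0 by simp
  have a1: "a \<le> 1"
  proof -
    have l2: "1 \<le> \<Lambda>^2" using L by (simp add: one_le_power)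
    then have "1 / (8 * \<Lambda>^2) \<le> 1" by (simp add: divide_le_eq)
    then have "a \<le> 1 powr (1 / (p - 1))" unfolding a_def using p L0
      by (intro powr_mono2) auto
    then show ?thesis by simp
  qed
  have th0: "0 < \<theta>" "\<theta> \<le> 1/4" using a0 a1 by (auto simp: \<theta>_def)
  have "(4 * \<theta>) powr (p - 1) = 1 / (8 * \<Lambda>^2)"
    unfolding \<theta>_def a_def using p L0 by (simp add: powr_powr)
  then have th3: "(4 * \<theta>) powr (p - 1) * (2 * \<Lambda>) < 1 / (2 * \<Lambda>)"
    using L0 by (simp add: field_simps power2_eq_square)
  have g3: "3 powr (p - 1) \<ge> 1" using p by (intro ge_one_powr_ge_zero) auto
  have de0: "0 < \<delta>" unfolding \<delta>_def using L0 by simp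
  have de1: "\<delta> \<le> 1"
  proof -
    have "1 \<le> \<Lambda>^2" using L by (simp add: one_le_power)
    then have "1 * 1 \<le> \<Lambda>^2 * 3 powr (p - 1)" using g3 by (intro mult_mono) auto
    then have "1 \<le> 2 * \<Lambda>^2 * 3 powr (p - 1)" by simp
    then show ?thesis unfolding \<delta>_def by simp
  qed
  have de3: "\<Lambda> * 3 powr (p - 1) * \<delta> \<le> 1 / (2 * \<Lambda>)"
    unfolding \<delta>_def using L0 g3 by (simp add: field_simps power2_eq_square)
  have K0: "K > 0" unfolding K_def using th0 de0 Bm0 om L0
    by (simp add: Bm_def \<omega>_def less_max_iff_disj)
  have e10: "e1 > 0" unfolding e1_def using de0 Bm0 by (simp add: Bm_def)
  have e20: "e2 > 0" unfolding e2_def using de0 Bm0 L0 by (simp add: Bm_def)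
  have e00: "\<epsilon>0 > 0" unfolding \<epsilon>0_def using e10 e20 K0 by simp
  have e01: "\<epsilon>0 \<le> 1" unfolding \<epsilon>0_def by simp
  have s1: "\<epsilon>0 < e1" unfolding \<epsilon>0_def using e10 by simp
  have s2: "\<epsilon>0 < e2" unfolding \<epsilon>0_def using e20 by simp
  have e0K: "K * \<epsilon>0 < 1"
  proof -
    have "\<epsilon>0 \<le> 1 / (2 * K)" unfolding \<epsilon>0_def by simp
    then have "K * \<epsilon>0 \<le> K * (1 / (2 * K))" using K0 by (intro mult_left_mono) auto
    then show ?thesis using K0 by simp
  qed
  have C0: "C > 0" unfolding C_def using K0 by simp
  note mf = main_fixed[OF p L th0 th3 de0 de1 de3 K_def C_def e00 e01 e0K s1[unfolded e1_def] s2[unfolded e2_def]]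
  show ?thesis
    apply (rule exI[where x=\<epsilon>0])
    apply (rule conjI[OF e00])
    apply (rule exI[where x=C])
    apply (rule conjI[OF C0])
    apply (intro allI impI)
    apply (rule mf)
     apply assumption+
    done
qed

end
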